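(* Let $q_0>0$ and $\theta_+\in(0,\pi)$. Then $$q(x,t)=\frac{q_0e^{2iq_0^2t}\big[e^{i\theta_+}e^{2q_0x\sin\theta_+}+e^{-i\theta_+}e^{2q_0^2t\sin(2\theta_+)}\big]}{e^{2q_0x\sin\theta_+}+e^{2q_0^2t\sin(2\theta_+)}}$$ is a smooth solution on $\mathbb{R}^2$ of the nonlocal reverse space-time NLS equation $iq_t(x,t)=q_{xx}(x,t)-2q^2(x,t)q(-x,-t)$, and $q(x,t)\to q_0e^{i(2q_0^2t\pm\theta_+)}$ as $x\to\pm\infty$. *)

theory Defs
  imports "HOL-Analysis.Analysis"
begin

definition pdx :: "(real \<times> real \<Rightarrow> complex) \<Rightarrow> real \<times> real \<Rightarrow> complex" where
  "pdx (f :: real \<times> real \<Rightarrow> complex) = (\<lambda>(x,t). vector_derivative (\<lambda>y::real. f (y,t)) (at x))"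

definition pdt :: "(real \<times> real \<Rightarrow> complex) \<Rightarrow> real \<times> real \<Rightarrow> complex" where
  "pdt (f :: real \<times> real \<Rightarrow> complex) = (\<lambda>(x,t). vector_derivative (\<lambda>s::real. f (x,s)) (at t))"

fun iter_pd :: "bool list \<Rightarrow> (real \<times> real \<Rightarrow> complex) \<Rightarrow> real \<times> real \<Rightarrow> complex" where
  "iter_pd [] f = f"
| "iter_pd (b # bs) f = (if b then pdx else pdt) (iter_pd bs f)"

definition smooth_R2 :: "(real \<times> real \<Rightarrow> complex) \<Rightarrow> bool" where
  "smooth_R2 f \<longleftrightarrow> (\<forall>bs. continuous_on UNIV (iter_pd bs f) \<and>
      (\<forall>x t. (\<lambda>y. iter_pd bs f (y,t)) differentiable (at x) \<and>
             (\<lambda>s. iter_pd bs f (x,s)) differentiable (at t)))"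

definition qsol :: "real \<Rightarrow> real \<Rightarrow> real \<Rightarrow> real \<Rightarrow> complex" where
  "qsol q0 th x t =
     (of_real q0 * exp (\<i> * of_real (2 * q0^2 * t)) *
       (exp (\<i> * of_real th) * of_real (exp (2 * q0 * x * sin th)) + exp (- \<i> * of_real th) * of_real (exp (2 * q0^2 * t * sin (2 * th)))))
     / (of_real (exp (2 * q0 * x * sin th)) + of_real (exp (2 * q0^2 * t * sin (2 * th))))"

end

theory Submission imports Defs "HOL-Analysis.Analysis" begin

type_synonym cl = "(complex \<times> complex \<times> complex) list"

definition esz :: "cl \<Rightarrow> complex \<Rightarrow> complex \<Rightarrow> complex" where
  "esz cs z w = sum_list (map (\<lambda>(k,u,v). k * exp (u * z + v * w)) cs)"

lemma esz_Nil[simp]: "esz [] z w = 0" by (simp add: esz_def)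
lemma esz_Cons[simp]: "esz ((k,u,v)#cs) z w = k * exp (u * z + v * w) + esz cs z w" by (simp add: esz_def)
lemma esz_append[simp]: "esz (a @ b) z w = esz a z w + esz b z w" by (simp add: esz_def)

definition dxl :: "cl \<Rightarrow> cl" where "dxl cs = map (\<lambda>(k,u,v). (k*u,u,v)) cs"
definition dtl :: "cl \<Rightarrow> cl" where "dtl cs = map (\<lambda>(k,u,v). (k * v, u, v)) cs"
definition scl :: "complex \<Rightarrow> cl \<Rightarrow> cl" where "scl c cs = map (\<lambda>(k,u,v). (c*k,u,v)) cs"
definition mull :: "cl \<Rightarrow> cl \<Rightarrow> cl" where
  "mull c1 c2 = concat (map (\<lambda>(k1,u1,v1). map (\<lambda>(k2,u2,v2). (k1*k2,u1+u2,v1+v2)) c2) c1)"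

lemma esz_scl[simp]: "esz (scl c cs) z w = c * esz cs z w"
  by (induction cs) (auto simp: scl_def algebra_simps)

lemma esz_mull[simp]: "esz (mull c1 c2) z w = esz c1 z w * esz c2 z w"
proof (induction c1)
  case Nil then show ?case by (simp add: mull_def)
next
  case (Cons a c1)
  obtain k u v where a: "a = (k,u,v)" by (cases a) auto
  have "esz (map (\<lambda>(k2,u2,v2). (k*k2,u + u2, v + v2)) c2) z w = k * exp (u * z + v * w) * esz c2 z w"
    by (induction c2) (auto simp: algebra_simps exp_add)
  then show ?case using Cons by (simp add: mull_def a algebra_simps)
qed

lemma esz_dx0: "(f has_field_derivative f') (at z) \<Longrightarrow> ((\<lambda>z. esz cs (f z) w) has_field_derivative esz (dxl cs) (f z) w * f') (at z)"
  by (induction cs) (auto simp: dxl_def algebra_simps intro!: derivative_eq_intros)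

lemma esz_dx: "((\<lambda>z. esz cs z w) has_field_derivative esz (dxl cs) z w) (at z)"
  using esz_dx0[of "\<lambda>z. z" 1 z cs w] by simp

lemma esz_dt0: "(f has_field_derivative f') (at w) \<Longrightarrow> ((\<lambda>w. esz cs z (f w)) has_field_derivative esz (dtl cs) z (f w) * f') (at w)"
  by (induction cs) (auto simp: dtl_def algebra_simps intro!: derivative_eq_intros)

lemma esz_dt: "((\<lambda>w. esz cs z w) has_field_derivative esz (dtl cs) z w) (at w)"
  using esz_dt0[of "\<lambda>z. z" 1 w cs z] by simp

lemma esz_cont: "continuous_on UNIV (\<lambda>p::real\<times>real. esz cs (of_real (fst p)) (of_real (snd p)))"
  by (induction cs) (auto intro!: continuous_intros)

definition Qf :: "cl \<Rightarrow> cl \<Rightarrow> nat \<Rightarrow> real \<times> real \<Rightarrow> complex" where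
  "Qf dcs cs n = (\<lambda>(x,t). esz cs (of_real x) (of_real t) / esz dcs (of_real x) (of_real t) ^ n)"

definition nxl :: "cl \<Rightarrow> cl \<Rightarrow> nat \<Rightarrow> cl" where
  "nxl dcs cs n = mull (dxl cs) dcs @ scl (- of_nat n) (mull cs (dxl dcs))"
definition ntl :: "cl \<Rightarrow> cl \<Rightarrow> nat \<Rightarrow> cl" where
  "ntl dcs cs n = mull (dtl cs) dcs @ scl (- of_nat n) (mull cs (dtl dcs))"

lemma quot_alg:
  fixes g g' d d' :: complex
  assumes "d \<noteq> 0"
  shows "(g' * d ^ n - g * (of_nat n * (d' * d ^ (n - Suc 0)))) / (d ^ n * d ^ n)
       = (g' * d + (- of_nat n) * (g * d')) / d ^ Suc n"
proof (cases n)
  case 0 then show ?thesis using assms by (simp add: field_simps)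
next
  case (Suc m) then show ?thesis using assms by (simp add: field_simps power2_eq_square)
qed

lemma Qf_hasx:
  assumes nz: "\<And>x t. esz dcs (of_real x) (of_real t) \<noteq> 0"
  shows "((\<lambda>y. Qf dcs cs n (y,t)) has_vector_derivative Qf dcs (nxl dcs cs n) (Suc n) (x,t)) (at x)"
proof -
  define T where "T = (of_real t :: complex)"
  have "((\<lambda>z. esz cs z T / esz dcs z T ^ n) has_field_derivative
      (esz (dxl cs) (of_real x) T * esz dcs (of_real x) T ^ n - esz cs (of_real x) T *
        (of_nat n * (esz (dxl dcs) (of_real x) T * esz dcs (of_real x) T ^ (n - Suc 0)))) /
      (esz dcs (of_real x) T ^ n * esz dcs (of_real x) T ^ n)) (at (of_real x))" (is "(_ has_field_derivative ?V) _")
    by (rule DERIV_divide esz_dx DERIV_power)+ (use nz in \<open>simp add: T_def\<close>)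
  moreover have "?V = Qf dcs (nxl dcs cs n) (Suc n) (x,t)"
    unfolding Qf_def nxl_def using nz[of x t] by (simp add: quot_alg T_def del: power_Suc)
  ultimately have "((\<lambda>z. esz cs z T / esz dcs z T ^ n) has_field_derivative Qf dcs (nxl dcs cs n) (Suc n) (x,t)) (at (of_real x))"
    by (rule DERIV_cong)
  from has_vector_derivative_real_field[OF this] show ?thesis
    by (simp add: Qf_def T_def)
qed

lemma Qf_hast:
  assumes nz: "\<And>x t. esz dcs (of_real x) (of_real t) \<noteq> 0"
  shows "((\<lambda>s. Qf dcs cs n (x,s)) has_vector_derivative Qf dcs (ntl dcs cs n) (Suc n) (x,t)) (at t)"
proof -
  define X where "X = (of_real x :: complex)"
  have "((\<lambda>z. esz cs X z / esz dcs X z ^ n) has_field_derivative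
      (esz (dtl cs) X (of_real t) * esz dcs X (of_real t) ^ n - esz cs X (of_real t) *
        (of_nat n * (esz (dtl dcs) X (of_real t) * esz dcs X (of_real t) ^ (n - Suc 0)))) /
      (esz dcs X (of_real t) ^ n * esz dcs X (of_real t) ^ n)) (at (of_real t))" (is "(_ has_field_derivative ?V) _")
    by (rule DERIV_divide esz_dt DERIV_power)+ (use nz in \<open>simp add: X_def\<close>)
  moreover have "?V = Qf dcs (ntl dcs cs n) (Suc n) (x,t)"
    unfolding Qf_def ntl_def using nz[of x t] by (simp add: quot_alg X_def del: power_Suc)
  ultimately have "((\<lambda>z. esz cs X z / esz dcs X z ^ n) has_field_derivative Qf dcs (ntl dcs cs n) (Suc n) (x,t)) (at (of_real t))"
    by (rule DERIV_cong)
  from has_vector_derivative_real_field[OF this] show ?thesis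
    by (simp add: Qf_def X_def)
qed

lemma pdx_Qf:
  assumes nz: "\<And>x t. esz dcs (of_real x) (of_real t) \<noteq> 0"
  shows "pdx (Qf dcs cs n) = Qf dcs (nxl dcs cs n) (Suc n)"
  by (auto simp: pdx_def fun_eq_iff intro!: vector_derivative_at Qf_hasx nz)

lemma pdt_Qf:
  assumes nz: "\<And>x t. esz dcs (of_real x) (of_real t) \<noteq> 0"
  shows "pdt (Qf dcs cs n) = Qf dcs (ntl dcs cs n) (Suc n)"
  by (auto simp: pdt_def fun_eq_iff intro!: vector_derivative_at Qf_hast nz)

lemma iter_Qf:
  assumes nz: "\<And>x t. esz dcs (of_real x) (of_real t) \<noteq> 0"
  shows "\<exists>cs' n'. iter_pd bs (Qf dcs cs n) = Qf dcs cs' n'"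
proof (induction bs)
  case Nil then show ?case by auto
next
  case (Cons b bs)
  then obtain cs' n' where e: "iter_pd bs (Qf dcs cs n) = Qf dcs cs' n'" by blast
  show ?case using pdx_Qf[OF nz] pdt_Qf[OF nz] by (auto simp: e)
qed

lemma smooth_Qf:
  assumes nz: "\<And>x t. esz dcs (of_real x) (of_real t) \<noteq> 0"
  shows "smooth_R2 (Qf dcs cs n)"
  unfolding smooth_R2_def
proof (intro allI conjI)
  fix bs x t
  obtain cs' n' where e: "iter_pd bs (Qf dcs cs n) = Qf dcs cs' n'" using iter_Qf[OF nz] by blast
  have "continuous_on UNIV (\<lambda>p::real\<times>real. esz cs' (of_real (fst p)) (of_real (snd p)) /
           esz dcs (of_real (fst p)) (of_real (snd p)) ^ n')"
    by (intro continuous_intros esz_cont) (use nz in auto)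
  then show "continuous_on UNIV (iter_pd bs (Qf dcs cs n))"
    unfolding e unfolding Qf_def case_prod_unfold by simp
  show "(\<lambda>y. iter_pd bs (Qf dcs cs n) (y, t)) differentiable at x"
    unfolding e using Qf_hasx[OF nz, of cs' n' t x] by (auto simp: differentiable_def has_vector_derivative_def)
  show "(\<lambda>s. iter_pd bs (Qf dcs cs n) (x, s)) differentiable at t"
    unfolding e using Qf_hast[OF nz, of cs' n' x t] by (auto simp: differentiable_def has_vector_derivative_def)
qed


lemma dxl_simps[simp]: "dxl [] = []" "dxl ((k,u,v)#cs) = (k*u,u,v) # dxl cs"
  by (simp_all add: dxl_def)
lemma dtl_simps[simp]: "dtl [] = []" "dtl ((k,u,v)#cs) = (k * v,u,v) # dtl cs"
  by (simp_all add: dtl_def)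
lemma dxl_append[simp]: "dxl (a @ b) = dxl a @ dxl b" by (simp add: dxl_def)
lemma dtl_append[simp]: "dtl (a @ b) = dtl a @ dtl b" by (simp add: dtl_def)
lemma scl_simps[simp]: "scl c [] = []" "scl c ((k,u,v)#cs) = (c*k,u,v) # scl c cs"
  by (simp_all add: scl_def)
lemma mull_simps[simp]: "mull [] c2 = []"
  "mull ((k,u,v)#c1) c2 = map (\<lambda>(k2,u2,v2). (k*k2,u + u2,v + v2)) c2 @ mull c1 c2"
  by (simp_all add: mull_def)

lemma exp_2ab: "exp (2 * a * b) = exp (a * b) ^ 2" for a b :: complex
  by (simp add: mult.assoc exp_double)
lemma exp_2ab': "exp (2 * a * b * c) = exp (a * b * c) ^ 2" for a b c :: complex
  by (simp add: mult.assoc exp_double)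

lemma pde_test:
  fixes q0 A B W x t :: real and al be :: complex
  defines "dcs \<equiv> [(1, of_real A, 0), (1, 0, of_real B)]"
  defines "cs \<equiv> [(of_real q0 * al, of_real A, \<i> * of_real W), (of_real q0 * be, 0, of_real B + \<i> * of_real W)]"
  defines "E \<equiv> exp (of_real A * of_real x :: complex)"
  defines "F \<equiv> exp (of_real B * of_real t :: complex)"
  defines "P \<equiv> exp (\<i> * of_real W * of_real t :: complex)"
  assumes nz: "E + F \<noteq> 0" "E \<noteq> 0" "F \<noteq> 0" "P \<noteq> 0"
    and hA: "A = 2*q0*S" and hB: "B = 4*q0^2*S*C" and hW: "W = 2*q0^2"
    and hal: "al = of_real C + \<i> * of_real S" and hbe: "be = of_real C - \<i> * of_real S"
    and sc: "S^2 + C^2 = 1"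
  shows "\<i> * Qf dcs (ntl dcs cs 1) 2 (x,t) = Qf dcs (nxl dcs (nxl dcs cs 1) 2) 3 (x,t)
     - 2 * (Qf dcs cs 1 (x,t))^2 * (of_real q0 * inverse P * (al*F + be*E)/(E + F))"
proof -
  have sc': "(of_real S)^2 + (of_real C)^2 = (1::complex)"
    by (metis of_real_1 of_real_add of_real_power sc)
  show ?thesis
  unfolding dcs_def cs_def Qf_def nxl_def ntl_def
  apply (simp add: distrib_left distrib_right exp_add exp_2ab exp_2ab' flip: E_def F_def P_def)
  apply (simp only: divide_inverse power_inverse[symmetric] hA hB hW hal hbe of_real_mult of_real_power of_real_numeral)
  using sc' right_inverse[OF nz(1)] right_inverse[OF nz(4)] complex_i_mult_minus[of 1] by algebra
qed

lemma EF_nz: "exp (complex_of_real a * of_real x) + exp (of_real b * of_real t) \<noteq> 0"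
proof -
  have "exp (complex_of_real a * of_real x) + exp (of_real b * of_real t) = of_real (exp (a*x) + exp (b*t))"
    by (simp add: of_real_exp)
  moreover have "exp (a*x) + exp (b*t) > 0" by (intro add_pos_pos) auto
  ultimately show ?thesis by (metis less_irrefl of_real_eq_0_iff)
qed

lemma main_parts:
  fixes q0 th :: real
  defines "A \<equiv> 2 * q0 * sin th" and "B \<equiv> 2 * q0^2 * sin (2 * th)" and "W \<equiv> 2 * q0^2"
  defines "dcs \<equiv> [(1, complex_of_real A, 0), (1, 0, complex_of_real B)]"
  defines "cs \<equiv> [(of_real q0 * exp (\<i> * of_real th), of_real A, \<i> * of_real W),
                  (of_real q0 * exp (- \<i> * of_real th), 0, of_real B + \<i> * of_real W)]"
  shows "(\<lambda>(x,t). qsol q0 th x t) = Qf dcs cs 1"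
    and "\<And>x t. esz dcs (of_real x) (of_real t) \<noteq> 0"
    and "\<And>x t. qsol q0 th (-x) (-t) = of_real q0 * inverse (exp (\<i> * of_real W * of_real t))
          * (exp (\<i> * of_real th) * exp (of_real B * of_real t) + exp (- \<i> * of_real th) * exp (of_real A * of_real x))
          / (exp (of_real A * of_real x) + exp (of_real B * of_real t))"
proof -
  show "(\<lambda>(x,t). qsol q0 th x t) = Qf dcs cs 1"
    by (auto simp: fun_eq_iff qsol_def Qf_def dcs_def cs_def A_def B_def W_def exp_add of_real_exp algebra_simps)
  show "\<And>x t. esz dcs (of_real x) (of_real t) \<noteq> 0"
    using EF_nz by (simp add: dcs_def)
  fix x t
  define E where "E = exp (complex_of_real A * of_real x)"
  define F where "F = exp (complex_of_real B * of_real t)"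
  have "E \<noteq> 0" "F \<noteq> 0" "E + F \<noteq> 0" using EF_nz by (auto simp: E_def F_def)
  have e1: "complex_of_real (exp (2 * q0 * - x * sin th)) = inverse E"
    by (simp add: E_def A_def of_real_exp exp_minus[symmetric] algebra_simps)
  have e2: "complex_of_real (exp (2 * q0^2 * - t * sin (2*th))) = inverse F"
    by (simp add: F_def B_def of_real_exp exp_minus[symmetric] algebra_simps)
  have e3: "exp (\<i> * complex_of_real (2 * q0\<^sup>2 * - t)) = inverse (exp (\<i> * of_real W * of_real t))"
    by (simp add: W_def exp_minus[symmetric] algebra_simps)
  show "qsol q0 th (-x) (-t) = of_real q0 * inverse (exp (\<i> * of_real W * of_real t))
          * (exp (\<i> * of_real th) * exp (of_real B * of_real t) + exp (- \<i> * of_real th) * exp (of_real A * of_real x))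
          / (exp (of_real A * of_real x) + exp (of_real B * of_real t))"
  proof -
    have k1: "inverse E + inverse F = (E+F) / (E*F)" using \<open>E \<noteq> 0\<close> \<open>F \<noteq> 0\<close> by (simp add: field_simps)
    have k2: "a*inverse E + b*inverse F = (a*F+b*E)/(E*F)" for a b
      using \<open>E \<noteq> 0\<close> \<open>F \<noteq> 0\<close> by (simp add: field_simps)
    have key: "(a*inverse E + b*inverse F) / (inverse E + inverse F) = (a*F+b*E)/(E+F)" for a b
      unfolding k1 k2 using \<open>E \<noteq> 0\<close> \<open>F \<noteq> 0\<close> by simp
    show ?thesis
      unfolding qsol_def e1 e2 e3 unfolding E_def[symmetric] F_def[symmetric]
      by (simp only: times_divide_eq_right[symmetric] key)
  qed
qed


lemma exp_i_real: "exp (\<i> * complex_of_real a) = of_real (cos a) + \<i> * of_real (sin a)"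
  by (simp add: cis_conv_exp[symmetric] complex_eq_iff)

lemma exp_mi_real: "exp (- \<i> * complex_of_real a) = of_real (cos a) - \<i> * of_real (sin a)"
proof -
  have "exp (- \<i> * complex_of_real a) = exp (\<i> * complex_of_real (-a))" by simp
  also have "\<dots> = of_real (cos a) - \<i> * of_real (sin a)" by (simp only: exp_i_real) simp
  finally show ?thesis .
qed

lemma exp_mi_real': "exp (- (\<i> * complex_of_real a)) = of_real (cos a) - \<i> * of_real (sin a)"
  using exp_mi_real[of a] by simp

lemma expneg_lim: "(a::real) > 0 \<Longrightarrow> ((\<lambda>x. complex_of_real (exp (- (a * x)))) \<longlongrightarrow> 0) at_top"
proof -
  assume a: "a > 0"
  have "filterlim (\<lambda>x. a * x) at_top at_top"
    by (rule filterlim_tendsto_pos_mult_at_top[OF tendsto_const a filterlim_ident])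
  then have "filterlim (\<lambda>x. - (a * x)) at_bot at_top"
    by (simp add: filterlim_uminus_at_bot)
  then have "((\<lambda>x. exp (- (a * x))) \<longlongrightarrow> 0) at_top"
    by (rule filterlim_compose[OF exp_at_bot])
  then show ?thesis using tendsto_of_real by fastforce
qed

lemma qsol_top:
  fixes q0 th t :: real
  assumes A: "2 * q0 * sin th > 0"
  shows "((\<lambda>x. qsol q0 th x t) \<longlongrightarrow> q0 * exp (\<i> * (2 * q0^2 * t + th))) at_top"
proof -
  define A where "A = 2 * q0 * sin th"
  define P where "P = exp (\<i> * complex_of_real (2 * q0^2 * t))"
  define F where "F = complex_of_real (exp (2 * q0^2 * t * sin (2 * th)))"
  define al where "al = exp (\<i> * complex_of_real th)"
  define be where "be = exp (- \<i> * complex_of_real th)"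
  define G where "G = (\<lambda>x. complex_of_real (exp (- (A * x))))"
  have eq: "qsol q0 th x t = of_real q0 * P * (al + be * F * G x) / (1 + F * G x)" for x
  proof -
    define e where "e = complex_of_real (exp (A * x))"
    have eG: "e * G x = 1" by (simp add: e_def G_def flip: of_real_mult exp_add)
    have "e \<noteq> 0" "G x \<noteq> 0" using eG by auto
    have "1 + F * G x \<noteq> 0"
    proof -
      have "1 + F * G x = of_real (1 + exp (2 * q0^2 * t * sin (2 * th)) * exp (- (A * x)))"
        by (simp add: F_def G_def)
      moreover have "1 + exp (2 * q0^2 * t * sin (2 * th)) * exp (- (A * x)) > 0"
        by (intro add_pos_pos mult_pos_pos) auto
      ultimately show ?thesis by (metis less_irrefl of_real_eq_0_iff)
    qed
    have "e + F \<noteq> 0" using \<open>1 + F * G x \<noteq> 0\<close> eG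
      by (metis distrib_right mult_zero_left)
    have "qsol q0 th x t = of_real q0 * P * (al * e + be * F) / (e + F)"
      by (simp add: qsol_def P_def F_def al_def be_def e_def A_def mult.commute mult.left_commute)
    also have "\<dots> = of_real q0 * P * (al + be * F * G x) / (1 + F * G x)"
      using \<open>e + F \<noteq> 0\<close> \<open>1 + F * G x \<noteq> 0\<close> eG
      by (simp add: divide_simps) (simp add: algebra_simps)
    finally show ?thesis .
  qed
  have lim: "((\<lambda>x. of_real q0 * P * (al + be * F * G x) / (1 + F * G x)) \<longlongrightarrow>
          of_real q0 * P * (al + be * F * 0) / (1 + F * 0)) at_top"
    using expneg_lim[OF A] unfolding G_def A_def by (intro tendsto_intros) auto
  have val: "of_real q0 * P * (al + be * F * 0) / (1 + F * 0) = q0 * exp (\<i> * (2 * q0^2 * t + th))"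
    by (simp add: P_def al_def exp_add[symmetric] algebra_simps)
  show ?thesis unfolding eq using lim[unfolded val] .
qed

lemma qsol_bot:
  fixes q0 th t :: real
  assumes A: "2 * q0 * sin th > 0"
  shows "((\<lambda>x. qsol q0 th x t) \<longlongrightarrow> q0 * exp (\<i> * (2 * q0^2 * t - th))) at_bot"
proof -
  define A where "A = 2 * q0 * sin th"
  define P where "P = exp (\<i> * complex_of_real (2 * q0^2 * t))"
  define F where "F = complex_of_real (exp (2 * q0^2 * t * sin (2 * th)))"
  define al where "al = exp (\<i> * complex_of_real th)"
  define be where "be = exp (- \<i> * complex_of_real th)"
  define G where "G = (\<lambda>x. complex_of_real (exp (- (A * x))))"
  have F0: "F \<noteq> 0" by (simp add: F_def)
  have eq: "qsol q0 th (-x) t = of_real q0 * P * (al * G x + be * F) / (G x + F)" for x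
    by (simp add: qsol_def P_def F_def al_def be_def G_def A_def mult.commute mult.left_commute)
  have lim: "((\<lambda>x. of_real q0 * P * (al * G x + be * F) / (G x + F)) \<longlongrightarrow>
          of_real q0 * P * (al * 0 + be * F) / (0 + F)) at_top"
    using expneg_lim[OF A] F0 unfolding G_def A_def by (intro tendsto_intros) auto
  have val: "of_real q0 * P * (al * 0 + be * F) / (0 + F) = q0 * exp (\<i> * (2 * q0^2 * t - th))"
    using F0 by (simp add: P_def be_def exp_add[symmetric] algebra_simps)
  show ?thesis unfolding filterlim_at_bot_mirror eq using lim[unfolded val] .
qed

lemma suc3: "Suc (Suc 1) = 3" and suc2: "Suc 1 = 2" and suc2b: "Suc 2 = 3" by simp_all

theorem mainTheorem11:
  fixes q0 th :: real
  assumes "q0 > 0" and "0 < th" and "th < pi"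
  shows "smooth_R2 (\<lambda>(x,t). qsol q0 th x t)
    \<and> (\<forall>x t. \<i> * pdt (\<lambda>(x,t). qsol q0 th x t) (x,t)
              = pdx (pdx (\<lambda>(x,t). qsol q0 th x t)) (x,t)
                - 2 * (qsol q0 th x t)^2 * qsol q0 th (-x) (-t))
    \<and> (\<forall>t. ((\<lambda>x. qsol q0 th x t) \<longlongrightarrow> q0 * exp (\<i> * (2 * q0^2 * t + th))) at_top)
    \<and> (\<forall>t. ((\<lambda>x. qsol q0 th x t) \<longlongrightarrow> q0 * exp (\<i> * (2 * q0^2 * t - th))) at_bot)"
proof (intro conjI allI)
  have Apos: "2 * q0 * sin th > 0" using assms sin_gt_zero by auto
  note mp = main_parts[of q0 th]
  show "smooth_R2 (\<lambda>(x,t). qsol q0 th x t)"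
    unfolding mp(1) by (rule smooth_Qf[OF mp(2)])
  show "((\<lambda>x. qsol q0 th x t) \<longlongrightarrow> q0 * exp (\<i> * (2 * q0^2 * t + th))) at_top" for t
    by (rule qsol_top[OF Apos])
  show "((\<lambda>x. qsol q0 th x t) \<longlongrightarrow> q0 * exp (\<i> * (2 * q0^2 * t - th))) at_bot" for t
    by (rule qsol_bot[OF Apos])
  fix x t
  have qx: "qsol q0 th x t = Qf [(1, complex_of_real (2 * q0 * sin th), 0), (1, 0, complex_of_real (2 * q0^2 * sin (2 * th)))]
      [(of_real q0 * exp (\<i> * of_real th), of_real (2 * q0 * sin th), \<i> * of_real (2 * q0^2)),
       (of_real q0 * exp (- \<i> * of_real th), 0, of_real (2 * q0^2 * sin (2 * th)) + \<i> * of_real (2 * q0^2))] 1 (x,t)"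
    using fun_cong[OF mp(1), of "(x,t)"] by simp
  show "\<i> * pdt (\<lambda>(x,t). qsol q0 th x t) (x,t)
              = pdx (pdx (\<lambda>(x,t). qsol q0 th x t)) (x,t)
                - 2 * (qsol q0 th x t)^2 * qsol q0 th (-x) (-t)"
    unfolding mp(1) pdt_Qf[OF mp(2)] pdx_Qf[OF mp(2)] mp(3) qx suc3 suc2 suc2b
    apply (rule pde_test[where S = "sin th" and C = "cos th"])
    using EF_nz[of "2 * q0 * sin th" x "2 * q0^2 * sin (2 * th)" t]
    by (auto simp: sin_double exp_i_real exp_mi_real exp_mi_real')
qed
end
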